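(* For the binary tree-shifts $X_4=(A,D)$ and $X_6=(A,F)$, the limit $h_{PS}$ exists and $$h_{PS}(X_4)=h_{PS}(X_6)=\sum_{n=2}^\infty\frac{1}{2^n}\log\operatorname{Fib}(n+1),$$ where $(\operatorname{Fib}(m))_{m\ge1}=(1,1,2,3,5,8,\dots)$ is the Fibonacci sequence. Moreover, for $X_4$ one has for all $n\ge3$: $p(n)=\operatorname{Fib}(n+3)\operatorname{Fib}(n+2)\prod_{\ell=3}^{n+1}\operatorname{Fib}(\ell)^{2^{n+2-\ell}}$.
   Context: Binary tree-shifts: $k=2$, directions $a_1,a_2$, alphabet $\{0,1\}$; $(P,Q)$ is the set of trees $t:\{a_1,a_2\}^*\to\{0,1\}$ with $P_{t_x,t_{xa_1}}=1$, $Q_{t_x,t_{xa_2}}=1$ for all nodes $x$. Matrices: $A=\begin{pmatrix}1&1\\1&1\end{pmatrix}$, $D=\begin{pmatrix}1&1\\1&0\end{pmatrix}$, $F=\begin{pmatrix}0&1\\1&1\end{pmatrix}$. $p(n)$ is the number of allowed blocks of length $n$ (labellings $t|_{\Delta_n}$, $\Delta_n$ the words of length $\le n$), and $h_{PS}=\lim_{n\to\infty}\frac{\log p(n)}{1+2+\cdots+2^n}$. *)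

theory Defs
  imports Complex_Main "HOL-Number_Theory.Fib"
begin

text \<open>Nodes of the binary tree are words over the directions a1, a2,
  encoded as bool lists (False = a1, True = a2).
  A 2x2 0/1 matrix is a function nat => nat => nat on indices 0,1.\<close>

type_synonym mat01 = "nat \<Rightarrow> nat \<Rightarrow> nat"

definition mat2 :: "nat \<Rightarrow> nat \<Rightarrow> nat \<Rightarrow> nat \<Rightarrow> mat01" where
  "mat2 a b c d = (\<lambda>i j. if i = 0 then (if j = 0 then a else b) else (if j = 0 then c else d))"

definition matA :: mat01 where "matA = mat2 1 1 1 1"
definition matD :: mat01 where "matD = mat2 1 1 1 0"
definition matF :: mat01 where "matF = mat2 0 1 1 1"

definition tree_shift :: "mat01 \<Rightarrow> mat01 \<Rightarrow> (bool list \<Rightarrow> nat) set" where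
  "tree_shift P Q = {t. (\<forall>x. t x \<in> {0,1}) \<and>
      (\<forall>x. P (t x) (t (x @ [False])) = 1 \<and> Q (t x) (t (x @ [True])) = 1)}"

text \<open>Restriction of a tree to Delta_n (words of length at most n), extended by 0.\<close>
definition block_of :: "nat \<Rightarrow> (bool list \<Rightarrow> nat) \<Rightarrow> (bool list \<Rightarrow> nat)" where
  "block_of n t = (\<lambda>w. if length w \<le> n then t w else 0)"

definition pcount :: "mat01 \<Rightarrow> mat01 \<Rightarrow> nat \<Rightarrow> nat" where
  "pcount P Q n = card (block_of n ` tree_shift P Q)"

definition hPS_seq :: "mat01 \<Rightarrow> mat01 \<Rightarrow> nat \<Rightarrow> real" where
  "hPS_seq P Q n = ln (real (pcount P Q n)) / (\<Sum>i\<le>n. 2 ^ i)"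

end

theory Submission
  imports Defs
begin


definition VV :: "mat01 \<Rightarrow> nat \<Rightarrow> (bool list \<Rightarrow> nat) set" where
"VV Q n = {b. (\<forall>w. n < length w \<longrightarrow> b w = 0) \<and> (\<forall>w. b w \<in> {0,1}) \<and>
   (\<forall>x. length x < n \<longrightarrow> Q (b x) (b (x@[True])) = 1)}"

definition VR :: "mat01 \<Rightarrow> nat \<Rightarrow> nat \<Rightarrow> (bool list \<Rightarrow> nat) set" where
"VR Q n s = {b \<in> VV Q n. b [] = s}"

definition join :: "nat \<Rightarrow> (bool list \<Rightarrow> nat) \<Rightarrow> (bool list \<Rightarrow> nat) \<Rightarrow> bool list \<Rightarrow> nat" where
"join s L R = (\<lambda>w. case w of [] \<Rightarrow> s | x#w' \<Rightarrow> if x then R w' else L w')"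

lemma join_simps[simp]: "join s L R [] = s" "join s L R (True#w) = R w" "join s L R (False#w) = L w"
  by (auto simp: join_def)

lemma VR_Suc:
  assumes s: "s \<in> {0,1}"
  shows "VR Q (Suc m) s = (\<lambda>(L,R). join s L R) ` (VV Q m \<times> {R \<in> VV Q m. Q s (R []) = 1})"
proof
  show "VR Q (Suc m) s \<subseteq> (\<lambda>(L,R). join s L R) ` (VV Q m \<times> {R \<in> VV Q m. Q s (R []) = 1})"
  proof
    fix b assume b: "b \<in> VR Q (Suc m) s"
    hence sup: "\<And>w. Suc m < length w \<Longrightarrow> b w = 0" and val: "\<And>w. b w \<in> {0,1}"
      and con: "\<And>x. length x < Suc m \<Longrightarrow> Q (b x) (b (x@[True])) = 1" and rt: "b [] = s"
      by (auto simp: VR_def VV_def)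
    define L where "L = (\<lambda>w. b (False#w))"
    define R where "R = (\<lambda>w. b (True#w))"
    have eq: "b = join s L R"
    proof
      fix w show "b w = join s L R w"
        by (cases w) (auto simp: rt L_def R_def join_def)
    qed
    have L: "L \<in> VV Q m" unfolding VV_def L_def
    proof (intro CollectI conjI allI impI)
      fix w :: "bool list" assume "m < length w" thus "b (False#w) = 0" using sup[of "False#w"] by simp
    next
      fix w show "b (False#w) \<in> {0,1}" using val by simp
    next
      fix x :: "bool list" assume "length x < m"
      thus "Q (b (False#x)) (b (False#(x@[True]))) = 1" using con[of "False#x"] by simp
    qed
    have R: "R \<in> VV Q m" unfolding VV_def R_def
    proof (intro CollectI conjI allI impI)
      fix w :: "bool list" assume "m < length w" thus "b (True#w) = 0" using sup[of "True#w"] by simp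
    next
      fix w show "b (True#w) \<in> {0,1}" using val by simp
    next
      fix x :: "bool list" assume "length x < m"
      thus "Q (b (True#x)) (b (True#(x@[True]))) = 1" using con[of "True#x"] by simp
    qed
    have "Q s (R []) = 1" using con[of "[]"] rt by (simp add: R_def)
    with L R eq show "b \<in> (\<lambda>(L,R). join s L R) ` (VV Q m \<times> {R \<in> VV Q m. Q s (R []) = 1})"
      by force
  qed
next
  show "(\<lambda>(L,R). join s L R) ` (VV Q m \<times> {R \<in> VV Q m. Q s (R []) = 1}) \<subseteq> VR Q (Suc m) s"
  proof clarify
    fix L R assume L: "L \<in> VV Q m" and R: "R \<in> VV Q m" and q: "Q s (R []) = 1"
    from L have Ls: "\<And>w. m < length w \<Longrightarrow> L w = 0" and Lv: "\<And>w. L w \<in> {0,1}"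
      and Lc: "\<And>x. length x < m \<Longrightarrow> Q (L x) (L (x@[True])) = 1" by (auto simp: VV_def)
    from R have Rs: "\<And>w. m < length w \<Longrightarrow> R w = 0" and Rv: "\<And>w. R w \<in> {0,1}"
      and Rc: "\<And>x. length x < m \<Longrightarrow> Q (R x) (R (x@[True])) = 1" by (auto simp: VV_def)
    have "\<forall>w. Suc m < length w \<longrightarrow> join s L R w = 0"
    proof (intro allI impI)
      fix w :: "bool list" assume "Suc m < length w"
      thus "join s L R w = 0" using Ls Rs by (cases w) (auto simp: join_def)
    qed
    moreover have "\<forall>w. join s L R w \<in> {0,1}"
    proof
      fix w show "join s L R w \<in> {0,1}" using Lv Rv s by (cases w) (auto simp: join_def)
    qed
    moreover have "\<forall>x. length x < Suc m \<longrightarrow> Q (join s L R x) (join s L R (x@[True])) = 1"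
    proof (intro allI impI)
      fix x :: "bool list" assume "length x < Suc m"
      thus "Q (join s L R x) (join s L R (x@[True])) = 1"
        using Lc Rc q by (cases x) (auto simp: join_def)
    qed
    ultimately show "join s L R \<in> VR Q (Suc m) s" by (simp add: VR_def VV_def)
  qed
qed

lemma join_inj: "inj_on (\<lambda>(L,R). join s L R) X"
proof (rule inj_onI, clarify)
  fix L R L' R' assume "join s L R = join s L' R'"
  hence "\<And>w. join s L R (False#w) = join s L' R' (False#w)" "\<And>w. join s L R (True#w) = join s L' R' (True#w)"
    by auto
  thus "L = L' \<and> R = R'" by (auto simp: fun_eq_iff)
qed

lemma VV_split: "VV Q n = VR Q n 0 \<union> VR Q n 1"
  by (auto simp: VV_def VR_def)

lemma VR_0: "VR Q 0 s = (if s \<in> {0,1} then {\<lambda>w. if w = [] then s else 0} else {})"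
proof (cases "s \<in> {0,1}")
  case True
  have "b \<in> VR Q 0 s \<longleftrightarrow> b = (\<lambda>w. if w = [] then s else 0)" for b
  proof
    assume "b \<in> VR Q 0 s"
    thus "b = (\<lambda>w. if w = [] then s else 0)" by (auto simp: VR_def VV_def fun_eq_iff)
  next
    assume "b = (\<lambda>w. if w = [] then s else 0)"
    thus "b \<in> VR Q 0 s" using True by (auto simp: VR_def VV_def)
  qed
  thus ?thesis using True by auto
next
  case False thus ?thesis by (auto simp: VR_def VV_def)
qed

lemma VR_finite: "finite (VR Q n s)"
proof (induction n arbitrary: s)
  case 0 thus ?case by (simp add: VR_0)
next
  case (Suc m)
  have fV: "finite (VV Q m)" using Suc by (simp add: VV_split)
  show ?case
  proof (cases "s \<in> {0,1}")
    case True thus ?thesis using fV by (simp add: VR_Suc)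
  next
    case False
    have "VR Q (Suc m) s = {}" using False by (auto simp: VR_def VV_def)
    thus ?thesis by simp
  qed
qed

lemma VV_finite: "finite (VV Q n)" by (simp add: VV_split VR_finite)

lemma card_VV: "card (VV Q n) = card (VR Q n 0) + card (VR Q n 1)"
  unfolding VV_split by (rule card_Un_disjoint[OF VR_finite VR_finite]) (auto simp: VR_def)

lemma card_VR_Suc:
  assumes "s \<in> {0,1}"
  shows "card (VR Q (Suc m) s) = card (VV Q m) * card {R \<in> VV Q m. Q s (R []) = 1}"
  unfolding VR_Suc[OF assms]
  by (subst card_image[OF join_inj]) (simp add: card_cartesian_product)

lemma card_VR_0: "s \<in> {0,1} \<Longrightarrow> card (VR Q 0 s) = 1" by (simp add: VR_0)

fun cc :: "nat \<Rightarrow> nat \<times> nat" where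
  "cc 0 = (1,1)"
| "cc (Suc n) = (let (a,b) = cc n in ((a+b)*(a+b), (a+b)*a))"

lemma matD_simps: "matD 0 0 = 1" "matD 0 1 = 1" "matD 1 0 = 1" "matD 1 1 = 0"
  by (auto simp: matD_def mat2_def)
lemma matF_simps: "matF 0 0 = 0" "matF 0 1 = 1" "matF 1 0 = 1" "matF 1 1 = 1"
  by (auto simp: matF_def mat2_def)

lemma cardD: "card (VR matD n 0) = fst (cc n) \<and> card (VR matD n 1) = snd (cc n)"
proof (induction n)
  case 0 thus ?case by (simp add: card_VR_0)
next
  case (Suc m)
  have vals: "R \<in> VV Q m \<Longrightarrow> R [] \<in> {0,1}" for R Q by (auto simp: VV_def)
  have e0: "{R \<in> VV matD m. matD 0 (R []) = 1} = VV matD m"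
    by (auto simp: matD_def mat2_def)
  have e1: "{R \<in> VV matD m. matD 1 (R []) = 1} = VR matD m 0"
    using vals[of _ matD] by (force simp: matD_def mat2_def VR_def)
  have h0: "card (VR matD (Suc m) 0) = card (VV matD m) * card (VV matD m)"
    using card_VR_Suc[of 0 matD m] e0 by simp
  have h1: "card (VR matD (Suc m) 1) = card (VV matD m) * card (VR matD m 0)"
    using card_VR_Suc[of 1 matD m] e1 by simp
  show ?case using Suc h0 h1
    by (auto simp: card_VV split: prod.split)
qed

lemma cardF: "card (VR matF n 1) = fst (cc n) \<and> card (VR matF n 0) = snd (cc n)"
proof (induction n)
  case 0 thus ?case by (simp add: card_VR_0)
next
  case (Suc m)
  have vals: "R \<in> VV Q m \<Longrightarrow> R [] \<in> {0,1}" for R Q by (auto simp: VV_def)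
  have e0: "{R \<in> VV matF m. matF 1 (R []) = 1} = VV matF m"
    by (auto simp: matF_def mat2_def)
  have e1: "{R \<in> VV matF m. matF 0 (R []) = 1} = VR matF m 1"
    using vals[of _ matF] by (force simp: matF_def mat2_def VR_def)
  have h0: "card (VR matF (Suc m) 1) = card (VV matF m) * card (VV matF m)"
    using card_VR_Suc[of 1 matF m] e0 by simp
  have h1: "card (VR matF (Suc m) 0) = card (VV matF m) * card (VR matF m 1)"
    using card_VR_Suc[of 0 matF m] e1 by simp
  show ?case using Suc h0 h1
    by (auto simp: card_VV add.commute split: prod.split)
qed

lemma blocks_eq:
  assumes c: "c \<in> {0,1}" and Qc: "\<And>i. Q i c = 1"
  shows "block_of n ` tree_shift matA Q = VV Q n"
proof
  have A1: "\<And>i j. matA i j = 1" by (simp add: matA_def mat2_def)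
  show "block_of n ` tree_shift matA Q \<subseteq> VV Q n"
  proof clarify
    fix t assume "t \<in> tree_shift matA Q"
    hence v: "\<And>x. t x \<in> {0,1}" and q: "\<And>x. Q (t x) (t (x@[True])) = 1" by (auto simp: tree_shift_def)
    show "block_of n t \<in> VV Q n" using v q by (auto simp: VV_def block_of_def)
  qed
  show "VV Q n \<subseteq> block_of n ` tree_shift matA Q"
  proof
    fix b assume b: "b \<in> VV Q n"
    hence sup: "\<And>w. n < length w \<Longrightarrow> b w = 0" and val: "\<And>w. b w \<in> {0,1}"
      and con: "\<And>x. length x < n \<Longrightarrow> Q (b x) (b (x@[True])) = 1" by (auto simp: VV_def)
    define t where "t = (\<lambda>w. if length w \<le> n then b w else c)"
    have "t \<in> tree_shift matA Q"
      unfolding tree_shift_def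
    proof (intro CollectI conjI allI)
      fix x show "t x \<in> {0,1}" using val c by (simp add: t_def)
    next
      fix x show "matA (t x) (t (x @ [False])) = 1" by (simp add: A1)
    next
      fix x show "Q (t x) (t (x @ [True])) = 1"
      proof (cases "length x < n")
        case True thus ?thesis using con[of x] by (simp add: t_def)
      next
        case False thus ?thesis using Qc by (simp add: t_def)
      qed
    qed
    moreover have "block_of n t = b" using sup by (auto simp: block_of_def t_def fun_eq_iff)
    ultimately show "b \<in> block_of n ` tree_shift matA Q" by force
  qed
qed

definition TT :: "nat \<Rightarrow> nat" where "TT n = fst (cc n) + snd (cc n)"

lemma pcountD: "pcount matA matD n = TT n"
proof -
  have "pcount matA matD n = card (VV matD n)"
    unfolding pcount_def by (subst blocks_eq[of 0]) (auto simp: matD_def mat2_def)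
  thus ?thesis using cardD[of n] by (simp add: card_VV TT_def)
qed

lemma pcountF: "pcount matA matF n = TT n"
proof -
  have "pcount matA matF n = card (VV matF n)"
    unfolding pcount_def by (subst blocks_eq[of 1]) (auto simp: matF_def mat2_def)
  thus ?thesis using cardF[of n] by (simp add: card_VV TT_def)
qed



lemma TT_Suc: "TT (Suc n) = TT n * (TT n + fst (cc n))" "fst (cc (Suc n)) = TT n * TT n"
  by (auto simp: TT_def split: prod.split simp: algebra_simps)

declare cc.simps(2)[simp del]

lemma TT_pos: "TT n > 0"
  by (induction n) (auto simp: TT_Suc, simp add: TT_def)

definition ff :: "nat \<Rightarrow> nat" where "ff = fib"

lemma ff4: "ff (n+4) = ff (n+3) + ff (n+2)"
proof -
  have "fib (Suc (Suc (n+2))) = fib (Suc (n+2)) + fib (n+2)" by (rule fib.simps(3))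
  moreover have "Suc (Suc (n+2)) = n+4" "Suc (n+2) = n+3" by simp_all
  ultimately show ?thesis unfolding ff_def by metis
qed

lemma ff3pos: "ff (n+3) > 0" unfolding ff_def by (rule fib_neq_0_nat) simp
lemma ff012: "ff 0 = 0" "ff 1 = 1" "ff 2 = 1" "ff 3 = 2" "ff 4 = 3"
  "ff (Suc 0) = 1" "ff (Suc (Suc 0)) = 1" "ff (Suc (Suc (Suc 0))) = 2" "ff (Suc (Suc (Suc (Suc 0)))) = 3"
  by (simp_all add: ff_def eval_nat_numeral)

lemma inv: "TT n * ff (n+2) = ff (n+3) * fst (cc n)"
proof (induction n)
  case 0 thus ?case by (simp add: TT_def ff012)
next
  case (Suc n)
  have e: "Suc n + 2 = n + 3" "Suc n + 3 = n + 4" by simp_all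
  have "TT (Suc n) * ff (Suc n + 2) = TT n * (TT n * ff (n+3) + fst (cc n) * ff (n+3))"
    unfolding e by (simp add: TT_Suc algebra_simps)
  also have "\<dots> = TT n * (TT n * ff (n+3) + TT n * ff (n+2))" using Suc by (simp add: mult.commute)
  also have "\<dots> = ff (Suc n + 3) * fst (cc (Suc n))" unfolding e by (simp add: TT_Suc ff4 algebra_simps)
  finally show ?case .
qed

lemma TT_rec: "TT (Suc n) * ff (n+3) = ff (n+4) * TT n ^ 2"
proof -
  have e: "Suc n + 2 = n + 3" "Suc n + 3 = n + 4" by simp_all
  show ?thesis using inv[of "Suc n"] unfolding e by (simp add: TT_Suc power2_eq_square mult.commute)
qed

definition G :: "nat \<Rightarrow> nat" where
  "G n = ff (n + 3) * ff (n + 2) * (\<Prod>l=3..n+1. ff l ^ (2 ^ (n + 2 - l)))"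

lemma G_rec: "G (Suc n) * ff (n+3) = ff (n+4) * G n ^ 2"
proof (cases n)
  case 0 thus ?thesis by (simp add: G_def ff012)
next
  case (Suc k)
  have split: "{3..Suc n+1} = insert (n+2) {3..n+1}" using Suc by auto
  define h where "h = (\<lambda>l. ff l ^ (2 ^ (n + 3 - l)))"
  define P where "P = (\<Prod>l=3..n+1. ff l ^ (2 ^ (n + 2 - l)))"
  have pw: "prod h {3..n+1} = P ^ 2"
    unfolding prod_power_distrib P_def h_def
  proof (rule prod.cong)
    fix l assume "l \<in> {3..n+1}"
    hence "n + 3 - l = Suc (n + 2 - l)" by auto
    thus "ff l ^ (2 ^ (n + 3 - l)) = (ff l ^ (2 ^ (n + 2 - l))) ^ 2"
      by (simp add: power_mult[symmetric] mult.commute)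
  qed simp
  have e: "Suc n + 2 = n + 3" "Suc n + 3 = n + 4" by simp_all
  have ins: "prod h (insert (n+2) {3..n+1}) = h (n+2) * prod h {3..n+1}"
    by (rule prod.insert) auto
  have h2: "h (n+2) = ff (n+2) ^ 2" by (simp add: h_def)
  have "G (Suc n) = ff (n + 4) * ff (n + 3) * prod h (insert (n+2) {3..n+1})"
    unfolding G_def e split h_def ..
  also have "\<dots> = ff (n + 4) * ff (n + 3) * (ff (n+2) ^ 2 * P ^ 2)"
    by (simp only: ins h2 pw)
  finally have GS: "G (Suc n) = ff (n + 4) * ff (n + 3) * (ff (n+2) ^ 2 * P ^ 2)" .
  have G0: "G n = ff (n + 3) * ff (n + 2) * P" unfolding G_def P_def ..
  show ?thesis unfolding GS G0 by (simp only: power2_eq_square ac_simps)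
qed

lemma TT_G: "TT n = G n"
proof (induction n)
  case 0 thus ?case by (simp add: TT_def G_def ff012)
next
  case (Suc n)
  have "TT (Suc n) * ff (n+3) = G (Suc n) * ff (n+3)" using TT_rec G_rec Suc by simp
  thus ?case using ff3pos[of n] by simp
qed



lemma fib_bound_nat: "3^m * fib (m+1) \<le> 5^m \<and> 3^(Suc m) * fib (Suc m + 1) \<le> 5^(Suc m)"
proof (induction m)
  case 0 thus ?case by (simp add: eval_nat_numeral)
next
  case (Suc m)
  have a: "3^(Suc m) * fib (Suc m + 1) \<le> 5^(Suc m)" and b: "3^m * fib (m+1) \<le> 5^m" using Suc by auto
  have f: "fib (Suc (Suc m) + 1) = fib (Suc m + 1) + fib (m + 1)" by simp
  have "3^(Suc (Suc m)) * fib (Suc (Suc m) + 1) = 3 * (3^(Suc m) * fib (Suc m + 1)) + 9 * (3^m * fib (m+1))"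
    unfolding f by (simp add: algebra_simps)
  also have "\<dots> \<le> 3 * 5^(Suc m) + 9 * 5^m" using a b by linarith
  also have "\<dots> \<le> 5^(Suc (Suc m))" by simp
  finally show ?case using a by simp
qed

lemma fib_bound: "real (fib (m+1)) \<le> (5/3)^m"
proof -
  have "real (3^m * fib (m+1)) \<le> real (5^m)" using fib_bound_nat[of m] by linarith
  hence "3^m * real (fib (m+1)) \<le> 5^m" by simp
  thus ?thesis by (simp add: power_divide field_simps)
qed

lemma fib_ge1: "real (fib (m+1)) \<ge> 1"
  using fib_neq_0_nat[of "m+1"] by simp

lemma ln_fib_bound: "0 \<le> ln (real (fib (m+1))) \<and> ln (real (fib (m+1))) \<le> (5/3)^m"
proof -
  have g: "real (fib (m+1)) \<ge> 1" by (rule fib_ge1)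
  have "ln (real (fib (m+1))) \<le> real (fib (m+1)) - 1" using g by (intro ln_le_minus_one) simp
  thus ?thesis using g fib_bound[of m] by simp
qed

definition gg :: "nat \<Rightarrow> real" where "gg m = ln (real (fib (m+1))) / 2^m"

lemma gg_eq: "(\<lambda>n. if n \<ge> 2 then ln (real (fib (n + 1))) / 2 ^ n else 0) = gg"
proof
  fix n show "(if n \<ge> 2 then ln (real (fib (n + 1))) / 2 ^ n else 0) = gg n"
  proof (cases "n \<ge> 2")
    case False hence "n = 0 \<or> n = 1" by auto
    thus ?thesis using False by (auto simp: gg_def)
  qed (simp add: gg_def)
qed

lemma gg_bound: "norm (gg m) \<le> (5/6)^m"
proof -
  have "0 \<le> gg m" using ln_fib_bound[of m] by (simp add: gg_def)
  moreover have "gg m \<le> (5/3)^m / 2^m" unfolding gg_def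
    using ln_fib_bound[of m] by (intro divide_right_mono) auto
  moreover have "(5/3::real)^m / 2^m = (5/6)^m"
    by (simp add: power_divide flip: power_mult_distrib)
  ultimately show ?thesis by simp
qed

lemma gg_summable: "summable gg"
  by (rule summable_comparison_test[OF _ summable_geometric[of "5/6::real"]]) (use gg_bound in auto)

definition PS :: "nat \<Rightarrow> real" where "PS n = (\<Sum>m<Suc n. gg m)"

lemma ff_fib: "ff k = fib k" by (simp add: ff_def)

lemma lnTT: "ln (real (TT n)) = 2^(n+1) * PS n + ln (real (fib (n+3))) + ln (real (fib (n+2)))"
proof (induction n)
  case 0 thus ?case by (simp add: TT_def PS_def gg_def eval_nat_numeral)
next
  case (Suc n)
  define a where "a = ln (real (fib (n+2)))"
  define b where "b = ln (real (fib (n+3)))"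
  define c where "c = ln (real (fib (n+4)))"
  have pos: "real (TT n) > 0" "real (fib (n+3)) > 0" "real (fib (n+4)) > 0" "real (TT (Suc n)) > 0"
    using TT_pos fib_neq_0_nat[of "n+3"] fib_neq_0_nat[of "n+4"] TT_pos[of "Suc n"] by auto
  have r: "real (TT (Suc n)) * real (fib (n+3)) = real (fib (n+4)) * real (TT n) ^ 2"
    using TT_rec[of n] unfolding ff_fib by (metis of_nat_mult of_nat_power)
  have "ln (real (TT (Suc n)) * real (fib (n+3))) = ln (real (fib (n+4)) * real (TT n) ^ 2)"
    using r by simp
  hence L: "ln (real (TT (Suc n))) + b = c + 2 * ln (real (TT n))"
    using pos by (simp add: ln_mult ln_realpow b_def c_def)
  have PSs: "PS (Suc n) = PS n + a / 2^(n+1)"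
    by (simp add: PS_def gg_def a_def add.commute)
  have e: "Suc n + 3 = n + 4" "Suc n + 2 = n + 3" "Suc n + 1 = n + 2" by simp_all
  have IH: "ln (real (TT n)) = 2^(n+1) * PS n + b + a" using Suc by (simp add: a_def b_def)
  have "2^(Suc n + 1) * PS (Suc n) = 2 * (2^(n+1) * PS n) + 2 * a"
    unfolding PSs by (simp add: field_simps)
  thus ?case unfolding e using L IH by (simp add: a_def b_def c_def)
qed

lemma geo_sum: "(\<Sum>i\<le>n. (2::real)^i) = 2^(n+1) - 1"
  by (induction n) simp_all

lemma main_limit:
  assumes p: "\<And>n. pcount P Q n = TT n"
  shows "hPS_seq P Q \<longlonglongrightarrow> suminf gg"
proof -
  define e where "e n = (ln (real (fib (n+3))) + ln (real (fib (n+2)))) / 2^(n+1)" for n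
  define r where "r n = 1 / (1 - (1/2::real)^(Suc n))" for n
  have eq: "hPS_seq P Q n = (PS n + e n) * r n" for n
  proof -
    have "(2::real)^(n+1) > 1" by (rule one_less_power) auto
    moreover have "(1/2::real)^(Suc n) = 1 / 2^(n+1)" by (simp add: power_divide)
    ultimately show ?thesis unfolding hPS_seq_def p lnTT geo_sum e_def r_def
      by (simp add: field_simps)
  qed
  have PSlim: "PS \<longlonglongrightarrow> suminf gg"
    unfolding PS_def using summable_LIMSEQ[OF gg_summable] by (rule LIMSEQ_Suc)
  have ebd: "0 \<le> e n \<and> e n \<le> 4 * (5/6)^n" for n
  proof -
    have b1: "0 \<le> ln (real (fib (n+3))) \<and> ln (real (fib (n+3))) \<le> (5/3)^(n+2)"
    proof -
      have q: "n+2+1 = n+3" by simp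
      show ?thesis using ln_fib_bound[of "n+2"] unfolding q .
    qed
    have b2: "0 \<le> ln (real (fib (n+2))) \<and> ln (real (fib (n+2))) \<le> (5/3)^(n+1)"
    proof -
      have q: "n+1+1 = n+2" by simp
      show ?thesis using ln_fib_bound[of "n+1"] unfolding q .
    qed
    have m: "(5/3::real)^(n+1) \<le> (5/3)^(n+2)" by (rule power_increasing) auto
    have s: "ln (real (fib (n+3))) + ln (real (fib (n+2))) \<le> 2 * (5/3)^(n+2)" using b1 b2 m by linarith
    have "e n \<le> 2 * (5/3)^(n+2) / 2^(n+1)" unfolding e_def
      by (rule divide_right_mono[OF s]) simp
    also have "\<dots> = 4 * (5/6)^(n+2)" by (simp add: power_divide field_simps flip: power_mult_distrib)
    also have "\<dots> \<le> 4 * (5/6)^n" by (simp add: power_decreasing)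
    finally show ?thesis using b1 b2 unfolding e_def by simp
  qed
  have elim: "e \<longlonglongrightarrow> 0"
  proof (rule tendsto_sandwich[of "\<lambda>n. 0" _ _ "\<lambda>n. 4 * (5/6::real)^n"])
    show "(\<lambda>n. 4 * (5/6::real)^n) \<longlonglongrightarrow> 0"
      by (intro tendsto_mult_right_zero LIMSEQ_power_zero) auto
  qed (use ebd in auto)
  have z: "(\<lambda>n. (1/2::real)^(Suc n)) \<longlonglongrightarrow> 0"
    by (rule LIMSEQ_Suc[OF LIMSEQ_power_zero]) auto
  have "(\<lambda>n. 1 / (1 - (1/2::real)^(Suc n))) \<longlonglongrightarrow> 1 / (1 - 0)"
    by (intro tendsto_intros z) auto
  hence rlim: "r \<longlonglongrightarrow> 1" unfolding r_def by simp
  have "(\<lambda>n. (PS n + e n) * r n) \<longlonglongrightarrow> (suminf gg + 0) * 1"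
    by (intro tendsto_intros PSlim elim rlim)
  thus ?thesis unfolding eq[symmetric] by (simp add: fun_eq_iff)
qed


theorem mainTheorem13:
  shows "summable (\<lambda>n. if n \<ge> 2 then ln (real (fib (n + 1))) / 2 ^ n else 0)
    \<and> hPS_seq matA matD \<longlonglongrightarrow> (\<Sum>n. if n \<ge> 2 then ln (real (fib (n + 1))) / 2 ^ n else 0)
    \<and> hPS_seq matA matF \<longlonglongrightarrow> (\<Sum>n. if n \<ge> 2 then ln (real (fib (n + 1))) / 2 ^ n else 0)
    \<and> (\<forall>n\<ge>3. pcount matA matD n =
          fib (n + 3) * fib (n + 2) * (\<Prod>l=3..n+1. fib l ^ (2 ^ (n + 2 - l))))"
proof -
  have p: "\<forall>n\<ge>3. pcount matA matD n =
          fib (n + 3) * fib (n + 2) * (\<Prod>l=3..n+1. fib l ^ (2 ^ (n + 2 - l)))"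
  proof (intro allI impI)
    fix n :: nat
    show "pcount matA matD n = fib (n + 3) * fib (n + 2) * (\<Prod>l=3..n+1. fib l ^ (2 ^ (n + 2 - l)))"
      unfolding pcountD TT_G G_def ff_def ..
  qed
  show ?thesis unfolding gg_eq
    using gg_summable main_limit[OF pcountD] main_limit[OF pcountF] p by blast
qed

end
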